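(* Let $\alpha\in(0,1)$, $T>0$, and let $y\in C^1([0,T])$. Fix $t\in(0,T)$, and for $n\in\mathbb{N}$ put $h=t/n$, $t_k=kh$, $y_k=y(t_k)$. Define the remainder $r_n$ by $$J^\alpha\delta^\alpha y_n = y_n - y_0 + r_n .$$ Then, setting $\beta:=\min(\alpha,1-\alpha)$, there are a constant $C$ depending only on $\alpha$ and $y$ and an $n_0$ such that for all $n\ge n_0$ (i.e. as $n\to\infty$ with $nh=t$) $$|r_n|\le C\,h^{\beta}\int_0^t (t-s)^{-\beta}\,|y'(s)|\,ds .$$
   Context: For $\beta>0$ and integers $j\ge 1$, the weights are $b_j(\beta)=j^\beta-(j-1)^\beta$. For a time step $h>0$, mesh points $t_k=kh$ and values $y_k=y(t_k)$, the discrete fractional integral (rectangle rule) and the L1 discretization of the Caputo derivative of order $\alpha\in(0,1)$ are $$J^\alpha y_n=\frac{h^\alpha}{\Gamma(1+\alpha)}\sum_{i=0}^{n-1} b_{n-i}(\alpha)\,y_{i+1},\qquad \delta^\alpha y_n=\frac{h^{-\alpha}}{\Gamma(2-\alpha)}\sum_{i=0}^{n-1} b_{n-i}(1-\alpha)\,(y_{i+1}-y_i).$$ The composition $J^\alpha\delta^\alpha y_n$ means $J^\alpha$ applied to the sequence $(\delta^\alpha y_k)_{k\ge1}$, i.e. $J^\alpha\delta^\alpha y_n=\frac{h^\alpha}{\Gamma(1+\alpha)}\sum_{i=0}^{n-1} b_{n-i}(\alpha)\,\delta^\alpha y_{i+1}$. *)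

theory Defs
  imports "HOL-Analysis.Analysis"
begin

definition bw :: "real \<Rightarrow> nat \<Rightarrow> real" where
  "bw \<beta> j = real j powr \<beta> - (real j - 1) powr \<beta>"

text \<open>Discrete fractional integral (rectangle rule) J^alpha y_n.\<close>
definition Jfrac :: "real \<Rightarrow> real \<Rightarrow> (nat \<Rightarrow> real) \<Rightarrow> nat \<Rightarrow> real" where
  "Jfrac \<alpha> h y n = h powr \<alpha> / Gamma (1 + \<alpha>) * (\<Sum>i<n. bw \<alpha> (n - i) * y (i + 1))"

text \<open>L1 discretisation of the Caputo derivative delta^alpha y_n.\<close>
definition L1 :: "real \<Rightarrow> real \<Rightarrow> (nat \<Rightarrow> real) \<Rightarrow> nat \<Rightarrow> real" where
  "L1 \<alpha> h y n = h powr (- \<alpha>) / Gamma (2 - \<alpha>) *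
     (\<Sum>i<n. bw (1 - \<alpha>) (n - i) * (y (i + 1) - y i))"

end

theory Submission
  imports Defs
begin



lemma powr_mvt:
  fixes a b q :: real
  assumes "0 < a" "a < b" "0 < q" "q < 1"
  shows "q * b powr (q-1) * (b-a) \<le> b powr q - a powr q"
    and "b powr q - a powr q \<le> q * a powr (q-1) * (b-a)"
proof -
  have d: "\<And>x. a \<le> x \<Longrightarrow> x \<le> b \<Longrightarrow> ((\<lambda>z. z powr q) has_real_derivative q * x powr (q-1)) (at x)"
    using assms by (auto intro: has_real_derivative_powr)
  obtain z where z: "a < z" "z < b" "b powr q - a powr q = (b - a) * (q * z powr (q-1))"
    using MVT2[OF assms(2) d] by blast
  have "b powr (q-1) \<le> z powr (q-1)" using z assms by (intro powr_mono2') auto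
  moreover have "z powr (q-1) \<le> a powr (q-1)" using z assms by (intro powr_mono2') auto
  ultimately show "q * b powr (q-1) * (b-a) \<le> b powr q - a powr q"
    and "b powr q - a powr q \<le> q * a powr (q-1) * (b-a)"
    using z assms by (auto simp: mult_ac intro!: mult_left_mono mult_right_mono)
qed



lemma ftc_powr:
  fixes a b q :: real
  assumes "0 \<le> a" "a \<le> b" "0 < q"
  shows "((\<lambda>u. q * u powr (q-1)) has_integral (b powr q - a powr q)) {a..b}"
proof (rule fundamental_theorem_of_calculus_interior[OF assms(2)])
  show "continuous_on {a..b} (\<lambda>u. u powr q)"
    using assms by (intro continuous_on_powr') (auto intro: continuous_intros)
  fix x assume "x \<in> {a<..<b}"
  hence "x > 0" using assms by auto
  thus "((\<lambda>u. u powr q) has_vector_derivative q * x powr (q-1)) (at x)"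
    using has_real_derivative_powr[of x q]
    by (simp add: has_real_derivative_iff_has_vector_derivative)
qed

lemma ftc_powr_refl:
  fixes a b p M :: real
  assumes "a \<le> b" "b \<le> M" "0 < p"
  shows "((\<lambda>u. p * (M-u) powr (p-1)) has_integral ((M-a) powr p - (M-b) powr p)) {a..b}"
proof -
  have "((\<lambda>u. p * (M-u) powr (p-1)) has_integral ((\<lambda>u. - ((M-u) powr p)) b - (\<lambda>u. - ((M-u) powr p)) a)) {a..b}"
  proof (rule fundamental_theorem_of_calculus_interior[OF assms(1)])
    show "continuous_on {a..b} (\<lambda>u. - ((M-u) powr p))"
      using assms by (intro continuous_intros continuous_on_powr') (auto intro: continuous_intros)
    fix x assume "x \<in> {a<..<b}"
    hence x: "M - x > 0" using assms by auto
    have "((\<lambda>u. - ((M-u) powr p)) has_real_derivative - (p * (M-x) powr (p-1) * (-1))) (at x)"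
      by (intro derivative_eq_intros DERIV_chain2[of "\<lambda>z. z powr p"] has_real_derivative_powr x)
         (auto)
    thus "((\<lambda>u. - ((M-u) powr p)) has_vector_derivative p * (M-x) powr (p-1)) (at x)"
      by (simp add: has_real_derivative_iff_has_vector_derivative)
  qed
  thus ?thesis by simp
qed

lemma beta_scaled:
  fixes \<alpha> M :: real
  assumes "0 < \<alpha>" "\<alpha> < 1" "0 < M"
  shows "((\<lambda>u. (1-\<alpha>) * u powr ((1-\<alpha>)-1) * (\<alpha> * (M-u) powr (\<alpha>-1)))
           has_integral (Gamma (1+\<alpha>) * Gamma (2-\<alpha>))) {0..M}"
proof -
  define q where "q = 1 - \<alpha>"
  have q: "0 < q" "q < 1" using assms by (auto simp: q_def)
  have B: "((\<lambda>t. t powr (q - 1) * (1 - t) powr (\<alpha> - 1)) has_integral Beta q \<alpha>) {0..1}"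
    using has_integral_Beta_real[OF q(1) assms(1)] .
  have S: "((\<lambda>x. (\<lambda>t. t powr (q - 1) * (1 - t) powr (\<alpha> - 1)) ((1/M) * x)) has_integral (1 / \<bar>1/M\<bar>) *\<^sub>R Beta q \<alpha>)
          ((\<lambda>x. x / (1/M)) ` {0..1})"
    by (rule has_integral_stretch_real[OF B]) (use assms in auto)
  have img: "(\<lambda>x. x / (1/M)) ` {0..1} = {0..M}"
  proof -
    have "(\<lambda>x. x / (1/M)) ` {0..1} = (\<lambda>x. M * x) ` {0..1}" by (auto simp: mult.commute)
    also have "\<dots> = {0..M}" using assms by (auto simp: image_affinity_atLeastAtMost)
    finally show ?thesis .
  qed
  have S2: "((\<lambda>x. (q*\<alpha>/M) * ((x/M) powr (q - 1) * (1 - x/M) powr (\<alpha> - 1))) has_integral (q*\<alpha>/M) * (M * Beta q \<alpha>)) {0..M}"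
    using has_integral_mult_right[OF S, of "q*\<alpha>/M"] assms img by (simp add: field_simps)
  have eq: "(q*\<alpha>/M) * ((x/M) powr (q - 1) * (1 - x/M) powr (\<alpha> - 1)) = q * x powr (q-1) * (\<alpha> * (M-x) powr (\<alpha>-1))"
    if "x \<in> {0..M}" for x
  proof -
    have "1 - x/M = (M-x)/M" using assms by (simp add: field_simps)
    hence "(x/M) powr (q - 1) * (1 - x/M) powr (\<alpha> - 1) = (x powr (q-1) / M powr (q-1)) * ((M-x) powr (\<alpha>-1) / M powr (\<alpha>-1))"
      using that assms by (simp add: powr_divide)
    also have "\<dots> = x powr (q-1) * (M-x) powr (\<alpha>-1) / M powr ((q-1) + (\<alpha>-1))"
    proof -
      have "M powr ((q-1) + (\<alpha>-1)) = M powr (q-1) * M powr (\<alpha>-1)" by (rule powr_add)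
      thus ?thesis by (simp only: times_divide_times_eq)
    qed
    also have "(q-1) + (\<alpha>-1) = -1" by (simp add: q_def)
    also have "M powr (-1) = 1/M" using assms by (simp add: powr_minus_divide)
    finally show ?thesis using assms by (simp add: field_simps)
  qed
  have val: "(q*\<alpha>/M) * (M * Beta q \<alpha>) = Gamma (1+\<alpha>) * Gamma (2-\<alpha>)"
  proof -
    have nq: "q \<notin> \<int>\<^sub>\<le>\<^sub>0" "\<alpha> \<notin> \<int>\<^sub>\<le>\<^sub>0" using q assms by (auto dest: nonpos_Ints_nonpos)
    have "Beta q \<alpha> = Gamma q * Gamma \<alpha>" by (simp add: Beta_altdef q_def)
    moreover have "Gamma (1+\<alpha>) = \<alpha> * Gamma \<alpha>" using Gamma_plus1[OF nq(2)] by (simp add: add.commute)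
    moreover have "Gamma (2-\<alpha>) = q * Gamma q" using Gamma_plus1[OF nq(1)] by (simp add: q_def)
    ultimately show ?thesis using assms by (simp add: field_simps)
  qed
  show ?thesis
    using has_integral_eq[OF eq S2] val by (simp add: q_def)
qed



lemma integral_pieces:
  fixes f :: "real \<Rightarrow> real" and h :: real
  assumes "f integrable_on {0..real n * h}" "0 \<le> h"
  shows "integral {0..real n * h} f = (\<Sum>j<n. integral {real j * h..real (Suc j) * h} f)"
  using assms(1)
proof (induction n)
  case 0 thus ?case by simp
next
  case (Suc n)
  have le: "real n * h \<le> real (Suc n) * h" using assms(2) by (simp add: algebra_simps)
  have i1: "f integrable_on {0..real n * h}"
    by (rule integrable_subinterval_real[OF Suc.prems]) (use le in auto)
  have "integral {0..real (Suc n) * h} f = integral {0..real n * h} f + integral {real n * h..real (Suc n) * h} f"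
    using Henstock_Kurzweil_Integration.integral_combine[OF _ le Suc.prems] assms(2) by simp
  thus ?case using Suc.IH[OF i1] by simp
qed

lemma piece_mid:
  fixes \<alpha> M :: real and i :: real
  assumes a: "0 < \<alpha>" "\<alpha> < 1" and i: "0 \<le> i" "i + 1 \<le> M - 1"
    and int: "(\<lambda>u. (1-\<alpha>) * u powr ((1-\<alpha>)-1) * (\<alpha> * (M-u) powr (\<alpha>-1))) integrable_on {i..i+1}"
  shows "\<bar>((M-i) powr \<alpha> - (M-i-1) powr \<alpha>) * ((i+1) powr (1-\<alpha>) - i powr (1-\<alpha>))
          - integral {i..i+1} (\<lambda>u. (1-\<alpha>) * u powr ((1-\<alpha>)-1) * (\<alpha> * (M-u) powr (\<alpha>-1)))\<bar>
         \<le> ((i+1) powr (1-\<alpha>) - i powr (1-\<alpha>)) * (\<alpha> * (M-i-1) powr (\<alpha>-1) - \<alpha> * (M-i) powr (\<alpha>-1))"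
proof -
  define q where "q = 1 - \<alpha>"
  define A where "A = (M-i) powr \<alpha> - (M-i-1) powr \<alpha>"
  define B where "B = (i+1) powr q - i powr q"
  define D where "D = \<alpha> * (M-i-1) powr (\<alpha>-1) - \<alpha> * (M-i) powr (\<alpha>-1)"
  define g where "g = (\<lambda>u::real. q * u powr (q-1))"
  define \<Phi> where "\<Phi> = (\<lambda>u. (1-\<alpha>) * u powr ((1-\<alpha>)-1) * (\<alpha> * (M-u) powr (\<alpha>-1)))"
  have q: "0 < q" "q < 1" using a by (auto simp: q_def)
  have gI: "(g has_integral B) {i..i+1}"
    unfolding g_def B_def by (rule ftc_powr) (use i q in auto)
  have gAI: "((\<lambda>u. g u * A) has_integral B * A) {i..i+1}"
    using has_integral_mult_left[OF gI] .
  have gDI: "((\<lambda>u. g u * D) has_integral B * D) {i..i+1}"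
    using has_integral_mult_left[OF gI] .
  have Ab: "\<alpha> * (M-i) powr (\<alpha>-1) \<le> A" "A \<le> \<alpha> * (M-i-1) powr (\<alpha>-1)"
    using powr_mvt[of "M-i-1" "M-i" \<alpha>] a i unfolding A_def by auto
  have pw: "\<bar>g u * A - \<Phi> u\<bar> \<le> g u * D" if u: "u \<in> {i..i+1}" for u
  proof -
    have g0: "g u \<ge> 0" using q unfolding g_def by simp
    have "\<Phi> u = g u * (\<alpha> * (M-u) powr (\<alpha>-1))" unfolding \<Phi>_def g_def q_def by simp
    moreover have "(M-i) powr (\<alpha>-1) \<le> (M-u) powr (\<alpha>-1)"
      using u i a by (intro powr_mono2') auto
    moreover have "(M-u) powr (\<alpha>-1) \<le> (M-i-1) powr (\<alpha>-1)"
      using u i a by (intro powr_mono2') auto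
    ultimately have m1: "\<alpha> * (M-i) powr (\<alpha>-1) \<le> \<alpha> * (M-u) powr (\<alpha>-1)"
      and m2: "\<alpha> * (M-u) powr (\<alpha>-1) \<le> \<alpha> * (M-i-1) powr (\<alpha>-1)"
      and phi: "\<Phi> u = g u * (\<alpha> * (M-u) powr (\<alpha>-1))"
      using a by (auto intro: mult_left_mono)
    have "\<bar>A - \<alpha> * (M-u) powr (\<alpha>-1)\<bar> \<le> D"
      using Ab m1 m2 unfolding D_def by (simp add: abs_le_iff)
    have "\<bar>g u * A - \<Phi> u\<bar> = g u * \<bar>A - \<alpha> * (M-u) powr (\<alpha>-1)\<bar>"
      unfolding phi using g0 by (simp add: abs_mult right_diff_distrib[symmetric])
    also have "\<dots> \<le> g u * D" using g0 \<open>\<bar>A - _\<bar> \<le> D\<close> by (rule mult_left_mono[rotated])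
    finally show ?thesis .
  qed
  have e1: "norm (integral {i..i+1} (\<lambda>u. g u * A - \<Phi> u)) \<le> integral {i..i+1} (\<lambda>u. g u * D)"
  proof (rule integral_norm_bound_integral)
    show "(\<lambda>u. g u * A - \<Phi> u) integrable_on {i..i+1}"
      using gAI int unfolding \<Phi>_def by (intro integrable_diff) (auto simp: has_integral_integrable)
    show "(\<lambda>u. g u * D) integrable_on {i..i+1}" using gDI by blast
  qed (use pw in auto)
  have e2: "integral {i..i+1} (\<lambda>u. g u * A - \<Phi> u) = B * A - integral {i..i+1} \<Phi>"
  proof -
    have "integral {i..i+1} (\<lambda>u. g u * A - \<Phi> u) = integral {i..i+1} (\<lambda>u. g u * A) - integral {i..i+1} \<Phi>"
      using gAI int unfolding \<Phi>_def by (intro integral_diff) (auto simp: has_integral_integrable)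
    also have "integral {i..i+1} (\<lambda>u. g u * A) = B * A" using gAI by (rule integral_unique)
    finally show ?thesis .
  qed
  have e3: "integral {i..i+1} (\<lambda>u. g u * D) = B * D" using gDI by (rule integral_unique)
  have "\<bar>A * B - integral {i..i+1} \<Phi>\<bar> \<le> B * D" using e1 unfolding e2 e3 real_norm_def mult.commute[of B A] .
  thus ?thesis unfolding A_def B_def D_def \<Phi>_def q_def .
qed

lemma piece_last:
  fixes \<alpha> M :: real
  assumes a: "0 < \<alpha>" "\<alpha> < 1" and M: "2 \<le> M"
    and int: "(\<lambda>u. (1-\<alpha>) * u powr ((1-\<alpha>)-1) * (\<alpha> * (M-u) powr (\<alpha>-1))) integrable_on {M-1..M}"
  shows "integral {M-1..M} (\<lambda>u. (1-\<alpha>) * u powr ((1-\<alpha>)-1) * (\<alpha> * (M-u) powr (\<alpha>-1)))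
          \<le> (1-\<alpha>) * (M-1) powr ((1-\<alpha>)-1)"
    and "0 \<le> integral {M-1..M} (\<lambda>u. (1-\<alpha>) * u powr ((1-\<alpha>)-1) * (\<alpha> * (M-u) powr (\<alpha>-1)))"
proof -
  define c where "c = (1-\<alpha>) * (M-1) powr ((1-\<alpha>)-1)"
  have fI: "((\<lambda>u. \<alpha> * (M-u) powr (\<alpha>-1)) has_integral ((M-(M-1)) powr \<alpha> - (M-M) powr \<alpha>)) {M-1..M}"
    by (rule ftc_powr_refl) (use a in auto)
  have one: "(M-(M-1)) powr \<alpha> - (M-M) powr \<alpha> = 1" by simp
  have fI': "((\<lambda>u. c * (\<alpha> * (M-u) powr (\<alpha>-1))) has_integral c) {M-1..M}"
    using has_integral_mult_right[OF fI, of c] unfolding one by simp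
  have "integral {M-1..M} (\<lambda>u. (1-\<alpha>) * u powr ((1-\<alpha>)-1) * (\<alpha> * (M-u) powr (\<alpha>-1)))
        \<le> integral {M-1..M} (\<lambda>u. c * (\<alpha> * (M-u) powr (\<alpha>-1)))"
  proof (rule integral_le[OF int])
    show "(\<lambda>u. c * (\<alpha> * (M-u) powr (\<alpha>-1))) integrable_on {M-1..M}" using fI' by blast
    fix u assume u: "u \<in> {M-1..M}"
    have "(1-\<alpha>) * u powr ((1-\<alpha>)-1) \<le> c"
      unfolding c_def using u a M by (intro mult_left_mono powr_mono2') auto
    thus "(1-\<alpha>) * u powr ((1-\<alpha>)-1) * (\<alpha> * (M-u) powr (\<alpha>-1)) \<le> c * (\<alpha> * (M-u) powr (\<alpha>-1))"
      using a by (intro mult_right_mono) auto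
  qed
  thus "integral {M-1..M} (\<lambda>u. (1-\<alpha>) * u powr ((1-\<alpha>)-1) * (\<alpha> * (M-u) powr (\<alpha>-1)))
          \<le> (1-\<alpha>) * (M-1) powr ((1-\<alpha>)-1)"
    using integral_unique[OF fI'] unfolding c_def by linarith
  show "0 \<le> integral {M-1..M} (\<lambda>u. (1-\<alpha>) * u powr ((1-\<alpha>)-1) * (\<alpha> * (M-u) powr (\<alpha>-1)))"
    using int a by (intro integral_nonneg) auto
qed




definition Sc :: "real \<Rightarrow> nat \<Rightarrow> real" where
  "Sc \<alpha> m = (\<Sum>i<m. bw \<alpha> (m - i) * bw (1 - \<alpha>) (i + 1))"

lemma Sc_bound_ge2:
  fixes \<alpha> :: real and m :: nat
  assumes a: "0 < \<alpha>" "\<alpha> < 1" and m: "2 \<le> m"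
  shows "\<bar>Sc \<alpha> m - Gamma (1+\<alpha>) * Gamma (2-\<alpha>)\<bar> \<le> 9 * real m powr (- min \<alpha> (1-\<alpha>))"
proof -
  define M where "M = real m"
  define q where "q = 1 - \<alpha>"
  define G0 where "G0 = Gamma (1+\<alpha>) * Gamma (2-\<alpha>)"
  define \<Phi> where "\<Phi> = (\<lambda>u. (1-\<alpha>) * u powr ((1-\<alpha>)-1) * (\<alpha> * (M-u) powr (\<alpha>-1)))"
  define I where "I = (\<lambda>i::nat. integral {real i..real i + 1} \<Phi>)"
  define B where "B = (\<lambda>i::nat. (real i + 1) powr q - real i powr q)"
  define D where "D = (\<lambda>i::nat. \<alpha> * (M - real i - 1) powr (\<alpha>-1) - \<alpha> * (M - real i) powr (\<alpha>-1))"
  define T where "T = (\<lambda>i::nat. ((M - real i) powr \<alpha> - (M - real i - 1) powr \<alpha>) * B i)"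
  have M2: "2 \<le> M" using m by (simp add: M_def)
  have q: "0 < q" "q < 1" using a by (auto simp: q_def)
  have PhiI: "(\<Phi> has_integral G0) {0..M}"
    unfolding \<Phi>_def G0_def using beta_scaled[OF a, of M] M2 by simp
  hence Phiint: "\<Phi> integrable_on {0..M}" by blast
  have pint: "\<Phi> integrable_on {real i..real i + 1}" if "i < m" for i
    by (rule integrable_subinterval_real[OF Phiint]) (use that in \<open>auto simp: M_def\<close>)
  have G0sum: "G0 = (\<Sum>i<m. I i)"
  proof -
    have "integral {0..real m * 1} \<Phi> = (\<Sum>j<m. integral {real j * 1..real (Suc j) * 1} \<Phi>)"
      by (rule integral_pieces) (use Phiint in \<open>auto simp: M_def\<close>)
    thus ?thesis using integral_unique[OF PhiI] by (simp add: I_def M_def add.commute)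
  qed
  have Sceq: "Sc \<alpha> m = (\<Sum>i<m. T i)"
    unfolding Sc_def
  proof (rule sum.cong[OF refl])
    fix i assume "i \<in> {..<m}"
    hence "real (m - i) = M - real i" by (simp add: M_def of_nat_diff)
    thus "bw \<alpha> (m - i) * bw (1 - \<alpha>) (i + 1) = T i"
      unfolding bw_def T_def B_def q_def by (simp add: add.commute)
  qed
  have diff: "Sc \<alpha> m - G0 = (\<Sum>i<m-1. T i - I i) + (T (m-1) - I (m-1))"
  proof -
    have "Sc \<alpha> m - G0 = (\<Sum>i<m. T i - I i)" unfolding Sceq G0sum by (simp add: sum_subtractf)
    also have "m = Suc (m-1)" using m by simp
    hence "(\<Sum>i<m. T i - I i) = (\<Sum>i<Suc (m-1). T i - I i)" by simp
    finally show ?thesis by simp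
  qed
  have mid: "\<bar>T i - I i\<bar> \<le> B i * D i" if "i < m - 1" for i
  proof -
    have "real i + 1 \<le> M - 1" using that by (simp add: M_def)
    from piece_mid[OF a _ this] pint[of i] that
    show ?thesis unfolding T_def B_def D_def I_def \<Phi>_def q_def by (simp add: mult.commute)
  qed
  have D0: "0 \<le> D i" if "i < m - 1" for i
  proof -
    have "(M - real i) powr (\<alpha>-1) \<le> (M - real i - 1) powr (\<alpha>-1)"
      using that a by (intro powr_mono2') (auto simp: M_def)
    thus ?thesis unfolding D_def using a by (simp add: mult_left_mono)
  qed
  have last: "\<bar>T (m-1) - I (m-1)\<bar> \<le> 4 * M powr (-\<alpha>)"
  proof -
    have e: "real (m-1) = M - 1" using m by (simp add: M_def of_nat_diff)
    have T1: "T (m-1) = M powr q - (M-1) powr q"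
      unfolding T_def B_def e by simp
    have Il: "I (m-1) \<le> q * (M-1) powr (q-1)" "0 \<le> I (m-1)"
      using piece_last[OF a M2] pint[of "m-1"] m unfolding I_def e \<Phi>_def q_def by auto
    have Tb: "M powr q - (M-1) powr q \<le> q * (M-1) powr (q-1)"
      using powr_mvt(2)[of "M-1" M q] q M2 by simp
    have T0: "0 \<le> M powr q - (M-1) powr q"
      using q M2 by (simp add: powr_mono2)
    have "\<bar>T (m-1) - I (m-1)\<bar> \<le> 2 * (q * (M-1) powr (q-1))"
      using Il Tb T0 unfolding T1 by linarith
    also have "\<dots> \<le> 2 * (M-1) powr (-\<alpha>)"
    proof -
      have "(1-\<alpha>) * (M-1) powr (-\<alpha>) \<le> 1 * (M-1) powr (-\<alpha>)"
        using a by (intro mult_right_mono) auto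
      thus ?thesis by (simp add: q_def)
    qed
    finally have s1: "\<bar>T (m-1) - I (m-1)\<bar> \<le> 2 * (M-1) powr (-\<alpha>)" .
    have s2: "(M-1) powr (-\<alpha>) \<le> (M/2) powr (-\<alpha>)"
      using M2 a by (intro powr_mono2') auto
    have s3: "(M/2) powr (-\<alpha>) = M powr (-\<alpha>) / 2 powr (-\<alpha>)"
      by (rule powr_divide)
    have s4: "2 powr (-\<alpha>) = inverse (2 powr \<alpha>)" by (rule powr_minus)
    have s5: "2 powr \<alpha> \<le> 2 powr (1::real)" using a by (intro powr_mono) auto
    have s6: "M powr (-\<alpha>) * 2 powr \<alpha> \<le> M powr (-\<alpha>) * 2" using s5 by (intro mult_left_mono) auto
    have "(M/2) powr (-\<alpha>) = M powr (-\<alpha>) * 2 powr \<alpha>" unfolding s3 s4 by (simp add: divide_inverse)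
    thus ?thesis using s1 s2 s6 by linarith
  qed
  define K where "K = m div 2"
  have K1: "1 \<le> K" "K \<le> m - 1" "real m \<le> 3 * real K" "real m \<le> 2 * real (m - K)"
  proof -
    have a1: "1 \<le> m div 2" "m div 2 \<le> m - 1" "m \<le> 3 * (m div 2)" "m \<le> 2 * (m - m div 2)"
      using m by presburger+
    have "real m \<le> real (3 * (m div 2))" "real m \<le> real (2 * (m - m div 2))"
      using a1(3,4) of_nat_mono by blast+
    thus "1 \<le> K" "K \<le> m - 1" "real m \<le> 3 * real K" "real m \<le> 2 * real (m - K)"
      using a1 unfolding K_def by auto
  qed
  have midsum: "\<bar>\<Sum>i<m-1. T i - I i\<bar> \<le> (\<Sum>i<m-1. B i * D i)"
  proof -
    have "(\<Sum>i<m-1. \<bar>T i - I i\<bar>) \<le> (\<Sum>i<m-1. B i * D i)"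
      by (rule sum_mono) (use mid in auto)
    thus ?thesis using sum_abs[of "\<lambda>i. T i - I i" "{..<m-1}"] by linarith
  qed
  have Bi: "B i \<le> q * real i powr (q-1)" if "1 \<le> i" for i
    using powr_mvt(2)[of "real i" "real i + 1" q] q that unfolding B_def by simp
  have Ble1: "B i \<le> 1" for i
  proof (cases "i = 0")
    case True thus ?thesis unfolding B_def by simp
  next
    case False
    hence "real i powr (q-1) \<le> 1 powr (q-1)" using q by (intro powr_mono2') auto
    hence h: "q * real i powr (q-1) \<le> q * 1" using q by (intro mult_left_mono) auto
    have "1 \<le> i" using False by simp
    from Bi[OF this] h q show ?thesis by linarith
  qed
  have Bbig: "B i \<le> 3 * M powr (-\<alpha>)" if "K \<le> i" for i
  proof -
    have i1: "1 \<le> i" "M/3 \<le> real i" using that K1 unfolding M_def by auto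
    have qa: "q - 1 = -\<alpha>" by (simp add: q_def)
    have "real i powr (-\<alpha>) \<le> (M/3) powr (-\<alpha>)" using a i1 M2 by (intro powr_mono2') auto
    also have "(M/3) powr (-\<alpha>) = M powr (-\<alpha>) / 3 powr (-\<alpha>)" by (rule powr_divide)
    also have "3 powr (-\<alpha>) = inverse (3 powr \<alpha>)" by (rule powr_minus)
    finally have "real i powr (q-1) \<le> M powr (-\<alpha>) * 3 powr \<alpha>" unfolding qa by (simp add: divide_inverse)
    moreover have "3 powr \<alpha> \<le> 3 powr (1::real)" using a by (intro powr_mono) auto
    ultimately have "real i powr (q-1) \<le> M powr (-\<alpha>) * 3"
    proof -
      have "M powr (-\<alpha>) * 3 powr \<alpha> \<le> M powr (-\<alpha>) * 3 powr (1::real)"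
        using \<open>3 powr \<alpha> \<le> 3 powr (1::real)\<close> by (intro mult_left_mono) auto
      thus ?thesis using \<open>real i powr (q-1) \<le> M powr (-\<alpha>) * 3 powr \<alpha>\<close> by simp
    qed
    hence "q * real i powr (q-1) \<le> 1 * (M powr (-\<alpha>) * 3)"
      using q by (intro mult_mono) auto
    thus ?thesis using Bi[OF i1(1)] by simp
  qed
  have pt: "B i * D i \<le> (if i < K then D i else 0) + 3 * M powr (-\<alpha>) * D i" if "i < m - 1" for i
  proof (cases "i < K")
    case True
    have "B i * D i \<le> 1 * D i" using Ble1[of i] D0[OF that] by (intro mult_right_mono) auto
    moreover have "0 \<le> 3 * M powr (-\<alpha>) * D i" using D0[OF that] by simp
    moreover have "(if i < K then D i else 0) = D i" using True by simp
    ultimately show ?thesis by linarith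
  next
    case False
    have "B i * D i \<le> (3 * M powr (-\<alpha>)) * D i" using Bbig[of i] False D0[OF that] by (intro mult_right_mono) auto
    thus ?thesis using False by simp
  qed
  have tele: "(\<Sum>i<n. D i) = \<alpha> * (M - real n) powr (\<alpha>-1) - \<alpha> * M powr (\<alpha>-1)" for n
  proof -
    have "(\<Sum>i<n. D i) = (\<Sum>i<n. (\<lambda>j. \<alpha> * (M - real j) powr (\<alpha>-1)) (Suc i) - (\<lambda>j. \<alpha> * (M - real j) powr (\<alpha>-1)) i)"
      unfolding D_def by (intro sum.cong) (auto simp: algebra_simps)
    also have "\<dots> = \<alpha> * (M - real n) powr (\<alpha>-1) - \<alpha> * M powr (\<alpha>-1)"
      by (subst sum_lessThan_telescope) simp
    finally show ?thesis .
  qed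
  have Mpos: "0 \<le> \<alpha> * M powr (\<alpha>-1)" using a by simp
  have sumK: "(\<Sum>i<K. D i) \<le> 2 * M powr (\<alpha>-1)"
  proof -
    have "(M - real K) powr (\<alpha>-1) \<le> (M/2) powr (\<alpha>-1)"
      using K1 a M2 unfolding M_def by (intro powr_mono2') (auto simp: of_nat_diff)
    also have "(M/2) powr (\<alpha>-1) = M powr (\<alpha>-1) / 2 powr (\<alpha>-1)" by (rule powr_divide)
    also have "2 powr (\<alpha>-1) = inverse (2 powr (1-\<alpha>))" using powr_minus[of 2 "1-\<alpha>"] by simp
    finally have "(M - real K) powr (\<alpha>-1) \<le> M powr (\<alpha>-1) * 2 powr (1-\<alpha>)" by (simp add: divide_inverse)
    moreover have "2 powr (1-\<alpha>) \<le> 2 powr (1::real)" using a by (intro powr_mono) auto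
    ultimately have "(M - real K) powr (\<alpha>-1) \<le> M powr (\<alpha>-1) * 2"
    proof -
      have "M powr (\<alpha>-1) * 2 powr (1-\<alpha>) \<le> M powr (\<alpha>-1) * 2 powr (1::real)"
        using \<open>2 powr (1-\<alpha>) \<le> 2 powr (1::real)\<close> by (intro mult_left_mono) auto
      thus ?thesis using \<open>(M - real K) powr (\<alpha>-1) \<le> M powr (\<alpha>-1) * 2 powr (1-\<alpha>)\<close> by simp
    qed
    hence "\<alpha> * (M - real K) powr (\<alpha>-1) \<le> 1 * (M powr (\<alpha>-1) * 2)"
      using a by (intro mult_mono) auto
    thus ?thesis unfolding tele using Mpos by simp
  qed
  have summ: "(\<Sum>i<m-1. D i) \<le> 1"
  proof -
    have "M - real (m-1) = 1" using m by (simp add: M_def of_nat_diff)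
    hence "(\<Sum>i<m-1. D i) = \<alpha> - \<alpha> * M powr (\<alpha>-1)" unfolding tele by simp
    thus ?thesis using Mpos a by linarith
  qed
  have "(\<Sum>i<m-1. B i * D i) \<le> (\<Sum>i<m-1. (if i < K then D i else 0) + 3 * M powr (-\<alpha>) * D i)"
    by (rule sum_mono) (use pt in auto)
  also have "\<dots> = (\<Sum>i<m-1. (if i < K then D i else 0)) + 3 * M powr (-\<alpha>) * (\<Sum>i<m-1. D i)"
    by (simp add: sum.distrib sum_distrib_left)
  also have "(\<Sum>i<m-1. (if i < K then D i else 0)) = (\<Sum>i\<in>{..<m-1} \<inter> {..<K}. D i)"
    by (subst sum.inter_restrict) auto
  also have "{..<m-1} \<inter> {..<K} = {..<K}" using K1 by auto
  finally have "(\<Sum>i<m-1. B i * D i) \<le> (\<Sum>i<K. D i) + 3 * M powr (-\<alpha>) * (\<Sum>i<m-1. D i)" .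
  moreover have "3 * M powr (-\<alpha>) * (\<Sum>i<m-1. D i) \<le> 3 * M powr (-\<alpha>) * 1"
    using summ by (intro mult_left_mono) auto
  ultimately have midb: "(\<Sum>i<m-1. B i * D i) \<le> 2 * M powr (\<alpha>-1) + 3 * M powr (-\<alpha>)"
    using sumK by linarith
  have "\<bar>Sc \<alpha> m - G0\<bar> \<le> 2 * M powr (\<alpha>-1) + 7 * M powr (-\<alpha>)"
    using midsum midb last unfolding diff by linarith
  moreover have "M powr (\<alpha>-1) \<le> M powr (- min \<alpha> (1-\<alpha>))" "M powr (-\<alpha>) \<le> M powr (- min \<alpha> (1-\<alpha>))"
    using M2 by (auto intro!: powr_mono)
  ultimately show ?thesis unfolding G0_def M_def by linarith
qed



lemma Sc_bound:
  fixes \<alpha> :: real and m :: nat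
  assumes a: "0 < \<alpha>" "\<alpha> < 1" and m: "1 \<le> m"
  shows "\<bar>Sc \<alpha> m / (Gamma (1+\<alpha>) * Gamma (2-\<alpha>)) - 1\<bar>
         \<le> ((10 + Gamma (1+\<alpha>) * Gamma (2-\<alpha>)) / (Gamma (1+\<alpha>) * Gamma (2-\<alpha>))) * real m powr (- min \<alpha> (1-\<alpha>))"
proof -
  define G0 where "G0 = Gamma (1+\<alpha>) * Gamma (2-\<alpha>)"
  have G0: "0 < G0" unfolding G0_def using a by simp
  have pw0: "0 \<le> real m powr (- min \<alpha> (1-\<alpha>))" by simp
  have main: "\<bar>Sc \<alpha> m - G0\<bar> \<le> (10 + G0) * real m powr (- min \<alpha> (1-\<alpha>))"
  proof (cases "m = 1")
    case True
    have "Sc \<alpha> m = 1" unfolding True Sc_def bw_def by simp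
    thus ?thesis using True G0 by simp
  next
    case False
    hence "2 \<le> m" using m by simp
    from Sc_bound_ge2[OF a this] have "\<bar>Sc \<alpha> m - G0\<bar> \<le> 9 * real m powr (- min \<alpha> (1-\<alpha>))"
      unfolding G0_def .
    moreover have "9 * real m powr (- min \<alpha> (1-\<alpha>)) \<le> (10 + G0) * real m powr (- min \<alpha> (1-\<alpha>))"
      using G0 pw0 by (intro mult_right_mono) auto
    ultimately show ?thesis by linarith
  qed
  have "Sc \<alpha> m / G0 - 1 = (Sc \<alpha> m - G0) / G0" using G0 by (simp add: field_simps)
  hence "\<bar>Sc \<alpha> m / G0 - 1\<bar> = \<bar>Sc \<alpha> m - G0\<bar> / G0" using G0 by simp
  also have "\<dots> \<le> (10 + G0) * real m powr (- min \<alpha> (1-\<alpha>)) / G0"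
    using main G0 by (intro divide_right_mono) auto
  finally show ?thesis unfolding G0_def by simp
qed

lemma swap_tri:
  fixes a :: "nat \<Rightarrow> nat \<Rightarrow> real"
  shows "(\<Sum>i<n. \<Sum>j<Suc i. a i j) = (\<Sum>j<n. \<Sum>i\<in>{j..<n}. a i j)"
proof (induction n)
  case 0 thus ?case by simp
next
  case (Suc n)
  have "(\<Sum>j<Suc n. \<Sum>i\<in>{j..<Suc n}. a i j) = (\<Sum>j<Suc n. (\<Sum>i\<in>{j..<n}. a i j) + a n j)"
    by (intro sum.cong) auto
  also have "\<dots> = (\<Sum>j<Suc n. \<Sum>i\<in>{j..<n}. a i j) + (\<Sum>j<Suc n. a n j)"
    by (simp add: sum.distrib)
  also have "(\<Sum>j<Suc n. \<Sum>i\<in>{j..<n}. a i j) = (\<Sum>j<n. \<Sum>i\<in>{j..<n}. a i j)"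
    by simp
  finally show ?case using Suc.IH by simp
qed

lemma inner_Sc:
  assumes "j < n"
  shows "(\<Sum>i\<in>{j..<n}. bw \<alpha> (n - i) * bw (1-\<alpha>) (Suc i - j)) = Sc \<alpha> (n - j)"
proof -
  have "(\<Sum>i\<in>{0+j..<(n-j)+j}. bw \<alpha> (n - i) * bw (1-\<alpha>) (Suc i - j))
        = (\<Sum>k\<in>{0..<n-j}. bw \<alpha> (n - (k+j)) * bw (1-\<alpha>) (Suc (k+j) - j))"
    by (rule sum.shift_bounds_nat_ivl)
  moreover have "(\<Sum>k\<in>{0..<n-j}. bw \<alpha> (n - (k+j)) * bw (1-\<alpha>) (Suc (k+j) - j)) = Sc \<alpha> (n - j)"
    unfolding Sc_def by (intro sum.cong) (auto simp: atLeast0LessThan add.commute)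
  ultimately show ?thesis using assms by simp
qed

lemma sum_pull:
  fixes f g :: "nat \<Rightarrow> real"
  shows "(\<Sum>i\<in>A. f i * (K * g i)) = K * (\<Sum>i\<in>A. f i * g i)"
  by (simp add: sum_distrib_left mult_ac)

lemma comp_formula:
  fixes Y :: "nat \<Rightarrow> real"
  assumes h: "0 < h"
  shows "Jfrac \<alpha> h (L1 \<alpha> h Y) n
         = (\<Sum>j<n. Sc \<alpha> (n - j) / (Gamma (1+\<alpha>) * Gamma (2-\<alpha>)) * (Y (j+1) - Y j))"
proof -
  define c where "c = 1 / (Gamma (1+\<alpha>) * Gamma (2-\<alpha>))"
  define a where "a = (\<lambda>i j. bw \<alpha> (n - i) * (bw (1 - \<alpha>) (Suc i - j) * (Y (j + 1) - Y j)))"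
  have hh: "h powr \<alpha> * h powr (-\<alpha>) = 1" using h by (simp add: powr_minus)
  have "Jfrac \<alpha> h (L1 \<alpha> h Y) n
      = h powr \<alpha> / Gamma (1 + \<alpha>) * (\<Sum>i<n. bw \<alpha> (n - i) * (h powr (- \<alpha>) / Gamma (2 - \<alpha>) *
          (\<Sum>j<i+1. bw (1 - \<alpha>) (i + 1 - j) * (Y (j + 1) - Y j))))"
    unfolding Jfrac_def L1_def ..
  also have "\<dots> = h powr \<alpha> / Gamma (1 + \<alpha>) * (h powr (- \<alpha>) / Gamma (2 - \<alpha>)) * (\<Sum>i<n. bw \<alpha> (n - i) *
          (\<Sum>j<i+1. bw (1 - \<alpha>) (i + 1 - j) * (Y (j + 1) - Y j)))"
    by (simp only: sum_pull mult.assoc)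
  also have "h powr \<alpha> / Gamma (1 + \<alpha>) * (h powr (- \<alpha>) / Gamma (2 - \<alpha>)) = c"
    using hh unfolding c_def by (simp add: field_simps)
  also have "(\<Sum>i<n. bw \<alpha> (n - i) * (\<Sum>j<i+1. bw (1 - \<alpha>) (i + 1 - j) * (Y (j + 1) - Y j)))
      = (\<Sum>i<n. \<Sum>j<Suc i. a i j)"
    unfolding a_def Suc_eq_plus1 by (simp only: sum_distrib_left)
  also have "\<dots> = (\<Sum>j<n. \<Sum>i\<in>{j..<n}. a i j)" by (rule swap_tri)
  also have "\<dots> = (\<Sum>j<n. Sc \<alpha> (n - j) * (Y (j + 1) - Y j))"
  proof (rule sum.cong[OF refl])
    fix j assume j: "j \<in> {..<n}"
    have "(\<Sum>i\<in>{j..<n}. a i j) = (\<Sum>i\<in>{j..<n}. bw \<alpha> (n - i) * bw (1-\<alpha>) (Suc i - j)) * (Y (j + 1) - Y j)"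
      unfolding a_def sum_distrib_right by (simp add: mult_ac)
    also have "\<dots> = Sc \<alpha> (n - j) * (Y (j + 1) - Y j)" using inner_Sc[of j n \<alpha>] j by simp
    finally show "(\<Sum>i\<in>{j..<n}. a i j) = Sc \<alpha> (n - j) * (Y (j + 1) - Y j)" .
  qed
  finally show ?thesis unfolding c_def by (simp add: sum_distrib_left)
qed


lemma w_integrable:
  fixes t \<beta> :: real and z :: "real \<Rightarrow> real"
  assumes t: "0 < t" and b: "0 < \<beta>" "\<beta> < 1" and zc: "continuous_on {0..t} z"
  shows "(\<lambda>s. (t - s) powr (- \<beta>) * \<bar>z s\<bar>) integrable_on {0..t}"
proof -
  have I1: "((\<lambda>u. (1-\<beta>) * (t-u) powr ((1-\<beta>)-1)) has_integral ((t-0) powr (1-\<beta>) - (t-t) powr (1-\<beta>))) {0..t}"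
    by (rule ftc_powr_refl) (use t b in auto)
  hence "(\<lambda>u. (1/(1-\<beta>)) * ((1-\<beta>) * (t-u) powr ((1-\<beta>)-1))) integrable_on {0..t}"
    using has_integral_mult_right[OF I1, of "1/(1-\<beta>)"] by blast
  hence gI: "(\<lambda>u. (t-u) powr (-\<beta>)) integrable_on {0..t}"
    by (rule integrable_eq) (use b in auto)
  hence gA: "(\<lambda>u. (t-u) powr (-\<beta>)) absolutely_integrable_on {0..t}"
    by (subst absolutely_integrable_on_iff_nonneg) auto
  have zac: "continuous_on {0..t} (\<lambda>s. \<bar>z s\<bar>)" using zc by (intro continuous_intros)
  have "(\<lambda>s. \<bar>z s\<bar> * (t - s) powr (- \<beta>)) absolutely_integrable_on {0..t}"
  proof (rule absolutely_integrable_bounded_measurable_product_real[OF _ _ _ gA])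
    show "(\<lambda>s. \<bar>z s\<bar>) \<in> borel_measurable (lebesgue_on {0..t})"
      by (rule continuous_imp_measurable_on_sets_lebesgue[OF zac]) auto
    show "{0..t} \<in> sets lebesgue" by simp
    show "bounded ((\<lambda>s. \<bar>z s\<bar>) ` {0..t})"
      by (intro compact_imp_bounded compact_continuous_image zac) auto
  qed
  hence "(\<lambda>s. \<bar>z s\<bar> * (t - s) powr (- \<beta>)) integrable_on {0..t}"
    by (rule set_lebesgue_integral_eq_integral(1))
  thus ?thesis by (simp add: mult.commute)
qed


theorem theorem2:
  fixes \<alpha> T :: real and y y' :: "real \<Rightarrow> real"
  assumes "0 < \<alpha>" "\<alpha> < 1" "0 < T"
    and "\<And>x. x \<in> {0..T} \<Longrightarrow> (y has_real_derivative y' x) (at x within {0..T})"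
    and "continuous_on {0..T} y'"
  shows "\<exists>C. \<forall>t \<in> {0<..<T}. \<exists>n0. \<forall>n \<ge> n0.
    (let h = t / real n; \<beta> = min \<alpha> (1 - \<alpha>);
         r = Jfrac \<alpha> h (L1 \<alpha> h (\<lambda>k. y (real k * h))) n - (y (real n * h) - y 0)
     in \<bar>r\<bar> \<le> C * h powr \<beta> * integral {0..t} (\<lambda>s. (t - s) powr (- \<beta>) * \<bar>y' s\<bar>))"
proof -
  note a = assms(1,2)
  define \<beta> where "\<beta> = min \<alpha> (1 - \<alpha>)"
  define G0 where "G0 = Gamma (1+\<alpha>) * Gamma (2-\<alpha>)"
  define C where "C = (10 + G0) / G0"
  have b: "0 < \<beta>" "\<beta> < 1" using a by (auto simp: \<beta>_def)
  have G0: "0 < G0" unfolding G0_def using a by simp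
  have C0: "0 \<le> C" using G0 by (simp add: C_def)
  have cb: "\<bar>Sc \<alpha> m / G0 - 1\<bar> \<le> C * real m powr (-\<beta>)" if "1 \<le> m" for m
    using Sc_bound[OF a that] unfolding C_def G0_def \<beta>_def .
  show ?thesis
  proof (intro exI[of _ C] ballI)
    fix t assume t: "t \<in> {0<..<T}"
    hence t0: "0 < t" "t < T" by auto
    define w where "w = (\<lambda>s. (t - s) powr (- \<beta>) * \<bar>y' s\<bar>)"
    have yc: "continuous_on {0..t} y'" using assms(5) by (rule continuous_on_subset) (use t0 in auto)
    have wI: "w integrable_on {0..t}" unfolding w_def by (rule w_integrable[OF t0(1) b yc])
    show "\<exists>n0. \<forall>n \<ge> n0.
    (let h = t / real n; \<beta> = min \<alpha> (1 - \<alpha>);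
         r = Jfrac \<alpha> h (L1 \<alpha> h (\<lambda>k. y (real k * h))) n - (y (real n * h) - y 0)
     in \<bar>r\<bar> \<le> C * h powr \<beta> * integral {0..t} (\<lambda>s. (t - s) powr (- \<beta>) * \<bar>y' s\<bar>))"
    proof (intro exI[of _ 1] allI impI)
      fix n :: nat assume n: "1 \<le> n"
      define h where "h = t / real n"
      define Y where "Y = (\<lambda>k. y (real k * h))"
      define P where "P = (\<lambda>j::nat. integral {real j * h..real (Suc j) * h} (\<lambda>s. \<bar>y' s\<bar>))"
      define W where "W = (\<lambda>j::nat. integral {real j * h..real (Suc j) * h} w)"
      have h: "0 < h" using n t0 by (simp add: h_def)
      have nh: "real n * h = t" using n by (simp add: h_def)
      have piece_sub: "{real j * h..real (Suc j) * h} \<subseteq> {0..t}" if "j < n" for j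
      proof -
        have "real (Suc j) * h \<le> real n * h" using that h by (intro mult_right_mono) auto
        thus ?thesis using h by (auto simp: nh)
      qed
      have le_piece: "real j * h \<le> real (Suc j) * h" for j using h by (simp add: algebra_simps)
      have dY: "\<bar>Y (j+1) - Y j\<bar> \<le> P j" if j: "j < n" for j
      proof -
        have sub: "{real j * h..real (Suc j) * h} \<subseteq> {0..T}" using piece_sub[OF j] t0 by auto
        have "(y' has_integral (y (real (Suc j) * h) - y (real j * h))) {real j * h..real (Suc j) * h}"
        proof (rule fundamental_theorem_of_calculus[OF le_piece])
          fix x assume x: "x \<in> {real j * h..real (Suc j) * h}"
          have "(y has_real_derivative y' x) (at x within {0..T})" using assms(4) sub x by auto
          hence "(y has_real_derivative y' x) (at x within {real j * h..real (Suc j) * h})"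
            by (rule has_field_derivative_subset) (use sub in auto)
          thus "(y has_vector_derivative y' x) (at x within {real j * h..real (Suc j) * h})"
            by (simp add: has_real_derivative_iff_has_vector_derivative)
        qed
        hence eq: "Y (j+1) - Y j = integral {real j * h..real (Suc j) * h} y'"
          unfolding Y_def by (simp add: integral_unique)
        have yc': "continuous_on {real j * h..real (Suc j) * h} y'"
          by (rule continuous_on_subset[OF yc piece_sub[OF j]])
        have ac: "continuous_on {real j * h..real (Suc j) * h} (\<lambda>s. \<bar>y' s\<bar>)"
          by (intro continuous_intros yc')
        have "norm (integral {real j * h..real (Suc j) * h} y') \<le> P j"
          unfolding P_def
          by (rule integral_norm_bound_integral)
             (use integrable_continuous_interval[OF yc'] integrable_continuous_interval[OF ac] in auto)
        thus ?thesis using eq by simp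
      qed
      have PW: "real (n - j) powr (-\<beta>) * P j \<le> h powr \<beta> * W j" if j: "j < n" for j
      proof -
        have tj: "t - real j * h = h * real (n - j)" using j nh by (simp add: of_nat_diff algebra_simps)
        have tjpos: "0 < t - real j * h" using tj j h by simp
        have "(t - real j * h) powr (-\<beta>) = h powr (-\<beta>) * real (n - j) powr (-\<beta>)"
          unfolding tj using h by (simp add: powr_mult)
        hence e1: "real (n - j) powr (-\<beta>) = h powr \<beta> * (t - real j * h) powr (-\<beta>)"
          using h by (simp add: powr_minus field_simps)
        have yc': "continuous_on {real j * h..real (Suc j) * h} y'"
          by (rule continuous_on_subset[OF yc piece_sub[OF j]])
        have ac: "continuous_on {real j * h..real (Suc j) * h} (\<lambda>s. \<bar>y' s\<bar>)"
          by (intro continuous_intros yc')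
        have aI: "(\<lambda>s. \<bar>y' s\<bar>) integrable_on {real j * h..real (Suc j) * h}"
          by (rule integrable_continuous_interval[OF ac])
        have wI': "w integrable_on {real j * h..real (Suc j) * h}"
          by (rule integrable_subinterval_real[OF wI piece_sub[OF j]])
        define v where "v = (\<lambda>s. if s = t then 0 else (t - real j * h) powr (-\<beta>) * \<bar>y' s\<bar>)"
        have "(t - real j * h) powr (-\<beta>) * P j = integral {real j * h..real (Suc j) * h} (\<lambda>s. (t - real j * h) powr (-\<beta>) * \<bar>y' s\<bar>)"
          unfolding P_def by simp
        also have "\<dots> = integral {real j * h..real (Suc j) * h} v"
          by (rule integral_spike[of "{t}"]) (auto simp: v_def)
        also have "\<dots> \<le> W j"
          unfolding W_def
        proof (rule integral_le)
          have "(\<lambda>s. (t - real j * h) powr (-\<beta>) * \<bar>y' s\<bar>) integrable_on {real j * h..real (Suc j) * h}"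
            using has_integral_mult_right[OF integrable_integral[OF aI], of "(t - real j * h) powr (-\<beta>)"] by blast
          thus "v integrable_on {real j * h..real (Suc j) * h}"
            unfolding v_def by (rule integrable_spike_finite[of "{t}", rotated 2]) auto
          show "w integrable_on {real j * h..real (Suc j) * h}" by (rule wI')
          fix s assume s: "s \<in> {real j * h..real (Suc j) * h}"
          show "v s \<le> w s"
          proof (cases "s = t")
            case True thus ?thesis by (simp add: v_def w_def)
          next
            case False
            have "s \<le> t" using piece_sub[OF j] s by auto
            hence "0 < t - s" "t - s \<le> t - real j * h" using False s by auto
            hence "(t - real j * h) powr (-\<beta>) \<le> (t - s) powr (-\<beta>)"
              using b by (intro powr_mono2') auto
            thus ?thesis using False by (simp add: v_def w_def mult_right_mono)
          qed
        qed
        finally have "(t - real j * h) powr (-\<beta>) * P j \<le> W j" .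
        hence "h powr \<beta> * ((t - real j * h) powr (-\<beta>) * P j) \<le> h powr \<beta> * W j"
          by (intro mult_left_mono) auto
        thus ?thesis unfolding e1 by (simp add: mult.assoc)
      qed
      have Pnn: "0 \<le> P j" if "j < n" for j
        unfolding P_def
      proof (rule integral_nonneg)
        have yc': "continuous_on {real j * h..real (Suc j) * h} y'"
          by (rule continuous_on_subset[OF yc piece_sub[OF that]])
        have ac: "continuous_on {real j * h..real (Suc j) * h} (\<lambda>s. \<bar>y' s\<bar>)"
          by (intro continuous_intros yc')
        show "(\<lambda>s. \<bar>y' s\<bar>) integrable_on {real j * h..real (Suc j) * h}"
          by (rule integrable_continuous_interval[OF ac])
      qed auto
      have comp: "Jfrac \<alpha> h (L1 \<alpha> h Y) n = (\<Sum>j<n. Sc \<alpha> (n - j) / G0 * (Y (j+1) - Y j))"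
        unfolding G0_def by (rule comp_formula[OF h])
      have tel: "Y n - Y 0 = (\<Sum>j<n. Y (j+1) - Y j)"
        using sum_lessThan_telescope[of Y n] by simp
      have req: "Jfrac \<alpha> h (L1 \<alpha> h Y) n - (Y n - Y 0) = (\<Sum>j<n. (Sc \<alpha> (n - j) / G0 - 1) * (Y (j+1) - Y j))"
        unfolding comp tel by (simp add: sum_subtractf left_diff_distrib)
      have "\<bar>\<Sum>j<n. (Sc \<alpha> (n - j) / G0 - 1) * (Y (j+1) - Y j)\<bar>
            \<le> (\<Sum>j<n. \<bar>(Sc \<alpha> (n - j) / G0 - 1) * (Y (j+1) - Y j)\<bar>)" by (rule sum_abs)
      also have "\<dots> \<le> (\<Sum>j<n. C * (h powr \<beta> * W j))"
      proof (rule sum_mono)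
        fix j assume j: "j \<in> {..<n}"
        have "\<bar>(Sc \<alpha> (n - j) / G0 - 1) * (Y (j+1) - Y j)\<bar> = \<bar>Sc \<alpha> (n - j) / G0 - 1\<bar> * \<bar>Y (j+1) - Y j\<bar>"
          by (simp add: abs_mult)
        also have "\<dots> \<le> (C * real (n - j) powr (-\<beta>)) * P j"
          using cb[of "n - j"] dY[of j] j C0 by (intro mult_mono) auto
        also have "\<dots> = C * (real (n - j) powr (-\<beta>) * P j)" by simp
        also have "\<dots> \<le> C * (h powr \<beta> * W j)" using PW[of j] j C0 by (intro mult_left_mono) auto
        finally show "\<bar>(Sc \<alpha> (n - j) / G0 - 1) * (Y (j+1) - Y j)\<bar> \<le> C * (h powr \<beta> * W j)" .
      qed
      also have "\<dots> = C * h powr \<beta> * (\<Sum>j<n. W j)" by (simp add: sum_distrib_left mult_ac)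
      also have "(\<Sum>j<n. W j) = integral {0..t} w"
        unfolding W_def using integral_pieces[of w n h] wI h nh by simp
      finally have fin: "\<bar>Jfrac \<alpha> h (L1 \<alpha> h Y) n - (Y n - Y 0)\<bar> \<le> C * h powr \<beta> * integral {0..t} w"
        unfolding req .
      have Yn: "Y n = y (real n * h)" "Y 0 = y 0" by (simp_all add: Y_def)
      show "let h = t / real n; \<beta> = min \<alpha> (1 - \<alpha>);
         r = Jfrac \<alpha> h (L1 \<alpha> h (\<lambda>k. y (real k * h))) n - (y (real n * h) - y 0)
     in \<bar>r\<bar> \<le> C * h powr \<beta> * integral {0..t} (\<lambda>s. (t - s) powr (- \<beta>) * \<bar>y' s\<bar>)"
        unfolding Let_def h_def[symmetric] \<beta>_def[symmetric] Y_def[symmetric] w_def[symmetric]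
        using fin unfolding Yn .
    qed
  qed
qed


end
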